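(* Consider any realization of a run of Algorithm 4 (described in the context). For every $k\in\mathcal{K}$, \[ m_k(x_k)-m_k(x_k+s_k)\ \ge\ \tfrac14\,\epsilon_H\,\|s_k\|^2 . \]
   Context: Let $f:\mathbb{R}^n\to\mathbb{R}$ be twice continuously differentiable with gradient $g=\nabla f$ and Hessian $H=\nabla^2f$; $\|\cdot\|$ is the Euclidean norm, $\lambda_{\min}$ the smallest eigenvalue, $\mathbb{S}^n$ the real symmetric $n\times n$ matrices. Write $f_k=f(x_k)$, $g_k=g(x_k)$, $H_k=H(x_k)$, $m_k(x)=f_k+g_k^T(x-x_k)+\tfrac12(x-x_k)^TH_k(x-x_k)$. Exact arithmetic is assumed. Algorithm 2 (truncated CG; inputs nonzero $g$, $H\in\mathbb{S}^n$, $\epsilon>0$, $\delta>0$, $\zeta\in(0,1)$, flag capCG, and $M\ge\|H\|$): $k_{\max}=\min\{n,\tfrac12\sqrt{\kappa}\ln(4\kappa^{3/2}/\zeta)\}$ with $\kappa=(M+2\epsilon)/\epsilon$ if capCG is true, else $k_{\max}=n$. Set $y_0=0,r_0=g,p_0=-g,j=0$. While $j<k_{\max}$: if $p_j^T(H+2\epsilon I)p_j\le\epsilon\|p_j\|^2$, return $s=y_j+\sigma p_j$ with $\sigma\ge0$, $\|s\|=\delta$, flag BND-NEG; set $\alpha_j=\|r_j\|^2/(p_j^T(H+2\epsilon I)p_j)$, $y_{j+1}=y_j+\alpha_jp_j$; if $\|y_{j+1}\|\ge\delta$, return $s=y_j+\sigma p_j$ with $\sigma\ge0$, $\|s\|=\delta$,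 flag BND-NORM; set $r_{j+1}=r_j+\alpha_j(H+2\epsilon I)p_j$; if $\|r_{j+1}\|\le\tfrac\zeta2\min\{\|g\|,\epsilon\|y_{j+1}\|\}$, return $s=y_{j+1}$, flag INT-RES; set $\beta_{j+1}=\|r_{j+1}\|^2/\|r_j\|^2$, $p_{j+1}=-r_{j+1}+\beta_{j+1}p_j$, $j\leftarrow j+1$. On loop exit return $s=y_j$, flag INT-MAX. Algorithm 3 (minimum eigenvalue oracle, MEO; inputs $g$, $H\in\mathbb{S}^n$, $\epsilon>0$, $\delta>0$, $\xi\in(0,1)$, $M\ge\|H\|$): a possibly randomized procedure that either returns $s=\pm\delta v$ with $\|v\|=1$, $v^THv\le-\epsilon/2$, satisfying $g^Ts\le0$, $s^THs\le-\tfrac12\epsilon\|s\|^2$, $\|s\|=\delta$, or returns an indication that $H\succeq-\epsilon I$. Algorithm 4 (inexact trust-region Newton-CG). Inputs: $\epsilon_g,\epsilon_H>0$; $\gamma_1\in(0,1)$, $\gamma_2\ge1$, $\psi\in(1/\gamma_2,1]$; $x_0$; $\delta_0>0$; $\delta_{\max}\ge\delta_0$; $\eta\in(0,1)$; $\zeta\in(0,1)$; $\xi\in[0,1)$; capCG; $M\ge L_g$. For $k=0,1,\dots$: evaluate $g_k,H_k$. If $g_k\ne0$, call Algorithm 2 with $(g_k,H_k,\epsilon_H,\delta_k,\zeta,\text{capCG},M)$ obtaining $s_k^{CG}$ and flag outCG; else set $s_k^{CG}=0$, outCG$=$INT-RES. If outCG$\in\{$BND-NEG, BND-NORM$\}$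 or ($\|g_k\|>\epsilon_g$ and outCG$=$INT-RES), set $s_k=s_k^{CG}$. Otherwise call Algorithm 3 with $(g_k,H_k,\epsilon_H,\delta_k,\xi,M)$; if it indicates $H_k\succeq-\epsilon_HI$, return $x_k$ (terminate), else take its output as $s_k$. Set $\rho_k=\frac{f_k-f(x_k+s_k)}{m_k(x_k)-m_k(x_k+s_k)}$. If $\rho_k\ge\eta$: $x_{k+1}=x_k+s_k$ and $\delta_{k+1}=\min\{\gamma_2\delta_k,\delta_{\max}\}$ if $\|s_k\|\ge\psi\delta_k$, else $\delta_{k+1}=\delta_k$. If $\rho_k<\eta$: $x_{k+1}=x_k$, $\delta_{k+1}=\gamma_1\|s_k\|$. $\mathcal{K}$ is the set of indices $k$ such that iteration $k$ is completed without termination (for the given realization). *)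

theory Defs
  imports "HOL-Analysis.Analysis"
begin

section \<open>Algorithm 2: truncated (capped) CG\<close>

datatype cg_flag = BND_NEG | BND_NORM | INT_RES | INT_MAX

fun cg_seq :: "real^'n \<Rightarrow> real^'n^'n \<Rightarrow> nat \<Rightarrow> ((real^'n) \<times> (real^'n) \<times> (real^'n))" where
  "cg_seq g A 0 = (0, g, - g)"
| "cg_seq g A (Suc j) =
     (let (y, r, p) = cg_seq g A j;
          \<alpha> = (norm r)\<^sup>2 / (p \<bullet> (A *v p));
          y' = y + \<alpha> *\<^sub>R p;
          r' = r + \<alpha> *\<^sub>R (A *v p);
          \<beta> = (norm r')\<^sup>2 / (norm r)\<^sup>2
      in (y', r', - r' + \<beta> *\<^sub>R p))"

definition cg_y :: "real^'n \<Rightarrow> real^'n^'n \<Rightarrow> nat \<Rightarrow> real^'n" where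
  "cg_y g A j = fst (cg_seq g A j)"
definition cg_r :: "real^'n \<Rightarrow> real^'n^'n \<Rightarrow> nat \<Rightarrow> real^'n" where
  "cg_r g A j = fst (snd (cg_seq g A j))"
definition cg_p :: "real^'n \<Rightarrow> real^'n^'n \<Rightarrow> nat \<Rightarrow> real^'n" where
  "cg_p g A j = snd (snd (cg_seq g A j))"

definition cg_kmax :: "nat \<Rightarrow> real \<Rightarrow> real \<Rightarrow> bool \<Rightarrow> real \<Rightarrow> real" where
  "cg_kmax n \<epsilon> \<zeta> capCG M =
     (if capCG then
        (let \<kappa> = (M + 2 * \<epsilon>) / \<epsilon>
         in min (real n) (1/2 * sqrt \<kappa> * ln (4 * \<kappa> powr (3/2) / \<zeta>)))
      else real n)"

text \<open>The BND outputs are "s = y_j + sigma p_j with sigma >= 0 and norm s = delta", stated relationally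
  exactly as in the algorithm.\<close>
definition cg_output :: "real^'n \<Rightarrow> real^'n^'n \<Rightarrow> real \<Rightarrow> real \<Rightarrow> real \<Rightarrow> bool \<Rightarrow> real
      \<Rightarrow> real^'n \<Rightarrow> cg_flag \<Rightarrow> bool" where
  "cg_output g H \<epsilon> \<delta> \<zeta> capCG M s flag \<longleftrightarrow>
    (let A = H + (2 * \<epsilon>) *\<^sub>R mat 1;
         kmax = cg_kmax CARD('n) \<epsilon> \<zeta> capCG M;
         y = cg_y g A; r = cg_r g A; p = cg_p g A;
         negc = (\<lambda>j. p j \<bullet> (A *v p j) \<le> \<epsilon> * (norm (p j))\<^sup>2);
         normc = (\<lambda>j. norm (y (Suc j)) \<ge> \<delta>);
         resc = (\<lambda>j. norm (r (Suc j)) \<le> \<zeta> / 2 * min (norm g) (\<epsilon> * norm (y (Suc j))));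
         stopc = (\<lambda>j. negc j \<or> normc j \<or> resc j)
     in (\<exists>j. real j < kmax \<and> (\<forall>i<j. \<not> stopc i) \<and>
            ((negc j \<and> flag = BND_NEG \<and>
                (\<exists>\<sigma>\<ge>0. s = y j + \<sigma> *\<^sub>R p j \<and> norm s = \<delta>))
           \<or> (\<not> negc j \<and> normc j \<and> flag = BND_NORM \<and>
                (\<exists>\<sigma>\<ge>0. s = y j + \<sigma> *\<^sub>R p j \<and> norm s = \<delta>))
           \<or> (\<not> negc j \<and> \<not> normc j \<and> resc j \<and> flag = INT_RES \<and> s = y (Suc j))))
      \<or> ((\<forall>i. real i < kmax \<longrightarrow> \<not> stopc i) \<and> flag = INT_MAX \<and>
            s = y (nat \<lceil>kmax\<rceil>)))"

section \<open>Algorithm 3: minimum eigenvalue oracle (specification of a returned direction)\<close>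

definition meo_direction :: "real^'n \<Rightarrow> real^'n^'n \<Rightarrow> real \<Rightarrow> real \<Rightarrow> real^'n \<Rightarrow> bool" where
  "meo_direction g H \<epsilon> \<delta> s \<longleftrightarrow>
     (\<exists>v. norm v = 1 \<and> v \<bullet> (H *v v) \<le> - \<epsilon> / 2 \<and> (s = \<delta> *\<^sub>R v \<or> s = - (\<delta> *\<^sub>R v)) \<and>
          g \<bullet> s \<le> 0 \<and> s \<bullet> (H *v s) \<le> - (1/2) * \<epsilon> * (norm s)\<^sup>2 \<and> norm s = \<delta>)"

section \<open>Algorithm 4\<close>

definition tr_model :: "(real^'n \<Rightarrow> real) \<Rightarrow> (real^'n \<Rightarrow> real^'n) \<Rightarrow> (real^'n \<Rightarrow> real^'n^'n)
    \<Rightarrow> real^'n \<Rightarrow> real^'n \<Rightarrow> real" where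
  "tr_model f g H xk x = f xk + g xk \<bullet> (x - xk) + 1/2 * ((x - xk) \<bullet> (H xk *v (x - xk)))"

definition alg4_cg_phase :: "real^'n \<Rightarrow> real^'n^'n \<Rightarrow> real \<Rightarrow> real \<Rightarrow> real \<Rightarrow> bool \<Rightarrow> real
      \<Rightarrow> real^'n \<Rightarrow> cg_flag \<Rightarrow> bool" where
  "alg4_cg_phase gk Hk \<epsilon>H \<delta>k \<zeta> capCG M sCG outCG \<longleftrightarrow>
     (if gk \<noteq> 0 then cg_output gk Hk \<epsilon>H \<delta>k \<zeta> capCG M sCG outCG
      else sCG = 0 \<and> outCG = INT_RES)"

definition alg4_accept_cg :: "real^'n \<Rightarrow> real \<Rightarrow> cg_flag \<Rightarrow> bool" where
  "alg4_accept_cg gk \<epsilon>g outCG \<longleftrightarrow>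
     outCG \<in> {BND_NEG, BND_NORM} \<or> (norm gk > \<epsilon>g \<and> outCG = INT_RES)"

definition alg4_step :: "(real^'n \<Rightarrow> real^'n) \<Rightarrow> (real^'n \<Rightarrow> real^'n^'n) \<Rightarrow> real \<Rightarrow> real \<Rightarrow> real
     \<Rightarrow> bool \<Rightarrow> real \<Rightarrow> real^'n \<Rightarrow> real \<Rightarrow> real^'n \<Rightarrow> bool" where
  "alg4_step g H \<epsilon>g \<epsilon>H \<zeta> capCG M xk \<delta>k sk \<longleftrightarrow>
     (\<exists>sCG outCG. alg4_cg_phase (g xk) (H xk) \<epsilon>H \<delta>k \<zeta> capCG M sCG outCG \<and>
        (if alg4_accept_cg (g xk) \<epsilon>g outCG then sk = sCG
         else meo_direction (g xk) (H xk) \<epsilon>H \<delta>k sk))"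

text \<open>An iteration in which the MEO is called (it terminates iff the MEO reports H_k >= -eps_H I).\<close>
definition alg4_calls_meo :: "(real^'n \<Rightarrow> real^'n) \<Rightarrow> (real^'n \<Rightarrow> real^'n^'n) \<Rightarrow> real \<Rightarrow> real \<Rightarrow> real
     \<Rightarrow> bool \<Rightarrow> real \<Rightarrow> real^'n \<Rightarrow> real \<Rightarrow> bool" where
  "alg4_calls_meo g H \<epsilon>g \<epsilon>H \<zeta> capCG M xk \<delta>k \<longleftrightarrow>
     (\<exists>sCG outCG. alg4_cg_phase (g xk) (H xk) \<epsilon>H \<delta>k \<zeta> capCG M sCG outCG \<and>
        \<not> alg4_accept_cg (g xk) \<epsilon>g outCG)"

text \<open>A realization of a run of Algorithm 4: iterates x, radii delta, steps s, and the set K of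
  indices of iterations completed without termination.\<close>
definition alg4_run :: "(real^'n \<Rightarrow> real) \<Rightarrow> (real^'n \<Rightarrow> real^'n) \<Rightarrow> (real^'n \<Rightarrow> real^'n^'n)
    \<Rightarrow> real \<Rightarrow> real \<Rightarrow> real \<Rightarrow> real \<Rightarrow> real \<Rightarrow> real^'n \<Rightarrow> real \<Rightarrow> real \<Rightarrow> real \<Rightarrow> real
    \<Rightarrow> bool \<Rightarrow> real
    \<Rightarrow> (nat \<Rightarrow> real^'n) \<Rightarrow> (nat \<Rightarrow> real) \<Rightarrow> (nat \<Rightarrow> real^'n) \<Rightarrow> nat set \<Rightarrow> bool" where
  "alg4_run f g H \<epsilon>g \<epsilon>H \<gamma>1 \<gamma>2 \<psi> x0 \<delta>0 \<delta>max \<eta> \<zeta> capCG M x \<delta> s K \<longleftrightarrow>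
     x 0 = x0 \<and> \<delta> 0 = \<delta>0 \<and>
     (\<forall>k\<in>K. \<forall>i\<le>k. i \<in> K) \<and>
     (\<forall>k\<in>K.
        alg4_step g H \<epsilon>g \<epsilon>H \<zeta> capCG M (x k) (\<delta> k) (s k) \<and>
        (let \<rho> = (f (x k) - f (x k + s k)) /
                  (tr_model f g H (x k) (x k) - tr_model f g H (x k) (x k + s k))
         in if \<rho> \<ge> \<eta> then
              x (Suc k) = x k + s k \<and>
              \<delta> (Suc k) = (if norm (s k) \<ge> \<psi> * \<delta> k then min (\<gamma>2 * \<delta> k) \<delta>max else \<delta> k)
            else x (Suc k) = x k \<and> \<delta> (Suc k) = \<gamma>1 * norm (s k))) \<and>
     (\<forall>k. k \<notin> K \<and> (\<forall>i<k. i \<in> K) \<longrightarrow> alg4_calls_meo g H \<epsilon>g \<epsilon>H \<zeta> capCG M (x k) (\<delta> k))"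

end

theory Submission
  imports Defs
begin

lemma schwarz_approx:
  fixes f :: "real^'n \<Rightarrow> real" and g :: "real^'n \<Rightarrow> real^'n" and L :: "real^'n^'n"
  assumes grad: "\<And>y. (f has_derivative (\<lambda>h. g y \<bullet> h)) (at y)"
    and hess: "(g has_derivative (\<lambda>h. L *v h)) (at y)"
    and e: "e > 0"
  shows "\<exists>d>0. \<forall>t. 0 < t \<and> t < d \<longrightarrow>
    \<bar>(f (y + t *\<^sub>R u + t *\<^sub>R v) - f (y + t *\<^sub>R u) - f (y + t *\<^sub>R v) + f y) - t^2 * (u \<bullet> (L *v v))\<bar>
      \<le> e * t^2 * ((2 * norm u + norm v) * norm u)"
proof -
  from hess[unfolded has_derivative_at_alt] e obtain d0 where d0: "d0 > 0"
    and d0b: "\<And>w. norm (w - y) < d0 \<Longrightarrow> norm (g w - g y - L *v (w - y)) \<le> e * norm (w - y)"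
    by blast
  define d where "d = d0 / (norm u + norm v + 1)"
  have np: "norm u + norm v + 1 > 0" by (simp add: add_pos_nonneg add_nonneg_pos)
  have dpos: "d > 0" using d0 np by (simp add: d_def)
  show ?thesis
  proof (intro exI[of _ d] conjI allI impI dpos)
    fix t :: real assume t: "0 < t \<and> t < d"
    have td0: "t * (norm u + norm v) < d0"
    proof -
      have "t * (norm u + norm v) \<le> t * (norm u + norm v + 1)" using t by simp
      also have "\<dots> < d * (norm u + norm v + 1)"
        using t np by (intro mult_strict_right_mono) auto
      also have "\<dots> = d0" unfolding d_def using np by simp
      finally show ?thesis .
    qed
    define \<phi> where "\<phi> s = f (y + s *\<^sub>R u + t *\<^sub>R v) - f (y + s *\<^sub>R u)" for s
    define \<phi>' where "\<phi>' s = g (y + s *\<^sub>R u + t *\<^sub>R v) \<bullet> u - g (y + s *\<^sub>R u) \<bullet> u" for s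
    have der: "(\<phi> has_real_derivative \<phi>' s) (at s)" for s
    proof -
      have h1: "((\<lambda>s. f (y + s *\<^sub>R u + t *\<^sub>R v)) has_derivative (\<lambda>h. g (y + s *\<^sub>R u + t *\<^sub>R v) \<bullet> (h *\<^sub>R u))) (at s)"
        by (rule has_derivative_compose[of "\<lambda>s. y + s *\<^sub>R u + t *\<^sub>R v" _ _ _ f, OF _ grad])
           (auto intro!: derivative_eq_intros)
      have h2: "((\<lambda>s. f (y + s *\<^sub>R u)) has_derivative (\<lambda>h. g (y + s *\<^sub>R u) \<bullet> (h *\<^sub>R u))) (at s)"
        by (rule has_derivative_compose[of "\<lambda>s. y + s *\<^sub>R u" _ _ _ f, OF _ grad])
           (auto intro!: derivative_eq_intros)
      have "(\<phi> has_derivative (\<lambda>h. g (y + s *\<^sub>R u + t *\<^sub>R v) \<bullet> (h *\<^sub>R u) - g (y + s *\<^sub>R u) \<bullet> (h *\<^sub>R u))) (at s)"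
        unfolding \<phi>_def by (rule has_derivative_diff[OF h1 h2])
      moreover have "(\<lambda>h. g (y + s *\<^sub>R u + t *\<^sub>R v) \<bullet> (h *\<^sub>R u) - g (y + s *\<^sub>R u) \<bullet> (h *\<^sub>R u)) = (*) (\<phi>' s)"
        by (auto simp: \<phi>'_def algebra_simps)
      ultimately show ?thesis by (simp add: has_field_derivative_def)
    qed
    obtain \<xi> where xi: "0 < \<xi>" "\<xi> < t" and mvt: "\<phi> t - \<phi> 0 = (t - 0) * \<phi>' \<xi>"
      using MVT2[of 0 t \<phi> \<phi>'] der t by auto
    have Deq: "f (y + t *\<^sub>R u + t *\<^sub>R v) - f (y + t *\<^sub>R u) - f (y + t *\<^sub>R v) + f y = t * \<phi>' \<xi>"
      using mvt by (simp add: \<phi>_def)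
    define w1 where "w1 = \<xi> *\<^sub>R u + t *\<^sub>R v"
    define w2 where "w2 = \<xi> *\<^sub>R u"
    define E1 where "E1 = g (y + w1) - g y - L *v w1"
    define E2 where "E2 = g (y + w2) - g y - L *v w2"
    have nw1: "norm w1 \<le> t * (norm u + norm v)"
    proof -
      have "norm w1 \<le> norm (\<xi> *\<^sub>R u) + norm (t *\<^sub>R v)" unfolding w1_def by (rule norm_triangle_ineq)
      also have "\<dots> = \<xi> * norm u + t * norm v" using xi by simp
      also have "\<dots> \<le> t * norm u + t * norm v" using xi by (intro add_right_mono mult_right_mono) auto
      finally show ?thesis by (simp add: algebra_simps)
    qed
    have nw2: "norm w2 \<le> t * norm u" unfolding w2_def using xi by (simp add: mult_right_mono)
    have nw2': "norm w2 \<le> t * (norm u + norm v)" using nw2 t by (smt (verit) mult_left_mono norm_ge_zero)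
    have E1b: "norm E1 \<le> e * norm w1" unfolding E1_def using d0b[of "y + w1"] nw1 td0 by simp
    have E2b: "norm E2 \<le> e * norm w2" unfolding E2_def using d0b[of "y + w2"] nw2' td0 by simp
    have phi_eq: "\<phi>' \<xi> = (E1 - E2) \<bullet> u + t * (u \<bullet> (L *v v))"
    proof -
      have "L *v w1 - L *v w2 = t *\<^sub>R (L *v v)"
        unfolding w1_def w2_def by (simp add: matrix_vector_right_distrib matrix_scaleR_vector_ac scaleR_matrix_vector_assoc)
      hence "\<phi>' \<xi> = (E1 - E2) \<bullet> u + (t *\<^sub>R (L *v v)) \<bullet> u"
        unfolding \<phi>'_def E1_def E2_def w1_def w2_def by (simp add: algebra_simps inner_diff_left)
      thus ?thesis by (simp add: inner_commute)
    qed
    have "\<bar>(E1 - E2) \<bullet> u\<bar> \<le> norm (E1 - E2) * norm u" by (rule Cauchy_Schwarz_ineq2)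
    also have "\<dots> \<le> (norm E1 + norm E2) * norm u" by (intro mult_right_mono norm_triangle_ineq4) auto
    also have "\<dots> \<le> (e * norm w1 + e * norm w2) * norm u" using E1b E2b by (intro mult_right_mono) auto
    also have "\<dots> \<le> (e * (t * (norm u + norm v)) + e * (t * norm u)) * norm u"
      using nw1 nw2 e by (intro mult_right_mono add_mono mult_left_mono) auto
    also have "\<dots> = e * t * ((2 * norm u + norm v) * norm u)" by (simp add: algebra_simps)
    finally have bnd: "\<bar>(E1 - E2) \<bullet> u\<bar> \<le> e * t * ((2 * norm u + norm v) * norm u)" .
    have "t * \<phi>' \<xi> - t^2 * (u \<bullet> (L *v v)) = t * ((E1 - E2) \<bullet> u)"
      by (simp add: phi_eq power2_eq_square algebra_simps)
    hence "\<bar>t * \<phi>' \<xi> - t^2 * (u \<bullet> (L *v v))\<bar> = t * \<bar>(E1 - E2) \<bullet> u\<bar>"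
      using t by (simp add: abs_mult)
    also have "\<dots> \<le> t * (e * t * ((2 * norm u + norm v) * norm u))" using t bnd by (simp add: mult_left_mono)
    finally show "\<bar>(f (y + t *\<^sub>R u + t *\<^sub>R v) - f (y + t *\<^sub>R u) - f (y + t *\<^sub>R v) + f y) - t^2 * (u \<bullet> (L *v v))\<bar>
      \<le> e * t^2 * ((2 * norm u + norm v) * norm u)" unfolding Deq by (simp add: power2_eq_square algebra_simps)
  qed
qed

lemma hess_sym:
  fixes f :: "real^'n \<Rightarrow> real" and g :: "real^'n \<Rightarrow> real^'n" and L :: "real^'n^'n"
  assumes grad: "\<And>y. (f has_derivative (\<lambda>h. g y \<bullet> h)) (at y)"
    and hess: "(g has_derivative (\<lambda>h. L *v h)) (at y)"
  shows "u \<bullet> (L *v v) = v \<bullet> (L *v u)"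
proof (rule ccontr)
  define c1 where "c1 = u \<bullet> (L *v v)"
  define c2 where "c2 = v \<bullet> (L *v u)"
  define C1 where "C1 = (2 * norm u + norm v) * norm u"
  define C2 where "C2 = (2 * norm v + norm u) * norm v"
  assume "\<not> ?thesis"
  hence ne: "\<bar>c1 - c2\<bar> > 0" unfolding c1_def c2_def by simp
  have C1: "C1 \<ge> 0" "C2 \<ge> 0" unfolding C1_def C2_def by auto
  define e where "e = \<bar>c1 - c2\<bar> / (C1 + C2 + 1)"
  have e: "e > 0" unfolding e_def using ne C1 by simp
  obtain d1 where d1: "d1 > 0" and h1: "\<And>t. 0 < t \<and> t < d1 \<Longrightarrow>
    \<bar>(f (y + t *\<^sub>R u + t *\<^sub>R v) - f (y + t *\<^sub>R u) - f (y + t *\<^sub>R v) + f y) - t^2 * c1\<bar> \<le> e * t^2 * C1"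
    using schwarz_approx[OF grad hess e, of u v] unfolding c1_def C1_def by blast
  obtain d2 where d2: "d2 > 0" and h2: "\<And>t. 0 < t \<and> t < d2 \<Longrightarrow>
    \<bar>(f (y + t *\<^sub>R v + t *\<^sub>R u) - f (y + t *\<^sub>R v) - f (y + t *\<^sub>R u) + f y) - t^2 * c2\<bar> \<le> e * t^2 * C2"
    using schwarz_approx[OF grad hess e, of v u] unfolding c2_def C2_def by blast
  define t where "t = min d1 d2 / 2"
  have t: "0 < t" "t < d1" "t < d2" using d1 d2 unfolding t_def by auto
  have eqy: "y + t *\<^sub>R v + t *\<^sub>R u = y + t *\<^sub>R u + t *\<^sub>R v" by (simp add: algebra_simps)
  define D where "D = f (y + t *\<^sub>R u + t *\<^sub>R v) - f (y + t *\<^sub>R u) - f (y + t *\<^sub>R v) + f y"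
  have a1: "\<bar>D - t^2 * c1\<bar> \<le> e * t^2 * C1" using h1 t unfolding D_def by auto
  have a2: "\<bar>D - t^2 * c2\<bar> \<le> e * t^2 * C2" using h2[of t] t unfolding D_def eqy by auto
  have "t^2 * \<bar>c1 - c2\<bar> = \<bar>t^2 * (c1 - c2)\<bar>" by (simp add: abs_mult)
  also have "\<dots> = \<bar>(D - t^2 * c2) - (D - t^2 * c1)\<bar>" by (simp add: algebra_simps)
  also have "\<dots> \<le> e * t^2 * C1 + e * t^2 * C2" using a1 a2 by linarith
  finally have "t^2 * \<bar>c1 - c2\<bar> \<le> t^2 * (e * (C1 + C2))" by (simp add: algebra_simps)
  hence "\<bar>c1 - c2\<bar> \<le> e * (C1 + C2)" using t by simp
  also have "\<dots> < \<bar>c1 - c2\<bar>" unfolding e_def using ne C1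
    by (simp add: field_simps)
  finally show False by simp
qed

lemma sq_exp: fixes u w :: "'a::real_inner"
  shows "(u + c *\<^sub>R w) \<bullet> (u + c *\<^sub>R w) = u \<bullet> u + 2 * c * (u \<bullet> w) + c * c * (w \<bullet> w)"
  by (simp add: inner_add_left inner_add_right inner_commute[of w u] algebra_simps)

lemma mv_scale: "(B :: real^'n^'m) *v (c *\<^sub>R x) = c *\<^sub>R (B *v x)"
  by (simp add: matrix_scaleR_vector_ac scaleR_matrix_vector_assoc)

lemma cg_0: "cg_y g A 0 = 0" "cg_r g A 0 = g" "cg_p g A 0 = - g"
  by (simp_all add: cg_y_def cg_r_def cg_p_def)

lemma cg_Suc:
  "cg_y g A (Suc j) = cg_y g A j + ((norm (cg_r g A j))\<^sup>2 / (cg_p g A j \<bullet> (A *v cg_p g A j))) *\<^sub>R cg_p g A j"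
  "cg_r g A (Suc j) = cg_r g A j + ((norm (cg_r g A j))\<^sup>2 / (cg_p g A j \<bullet> (A *v cg_p g A j))) *\<^sub>R (A *v cg_p g A j)"
  "cg_p g A (Suc j) = - cg_r g A (Suc j) + ((norm (cg_r g A (Suc j)))\<^sup>2 / (norm (cg_r g A j))\<^sup>2) *\<^sub>R cg_p g A j"
  by (simp_all add: cg_y_def cg_r_def cg_p_def Let_def split: prod.splits)

locale cgsym =
  fixes g :: "real^'n" and A :: "real^'n^'n"
  assumes sym: "\<And>x z. x \<bullet> (A *v z) = z \<bullet> (A *v x)"
begin

abbreviation "y \<equiv> cg_y g A"
abbreviation "r \<equiv> cg_r g A"
abbreviation "p \<equiv> cg_p g A"
abbreviation "a j \<equiv> p j \<bullet> (A *v p j)"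
abbreviation "al j \<equiv> (norm (r j))\<^sup>2 / a j"

lemma r_eq: "r j = A *v y j + g"
  by (induction j) (simp_all add: cg_0 cg_Suc matrix_vector_right_distrib matrix_scaleR_vector_ac scaleR_matrix_vector_assoc)

lemma r_zero_p: "r j = 0 \<Longrightarrow> p j = 0"
  by (cases j) (simp_all add: cg_0 cg_Suc)

lemma r_from_p: "r (Suc i) = - p (Suc i) + ((norm (r (Suc i)))\<^sup>2 / (norm (r i))\<^sup>2) *\<^sub>R p i"
  by (simp add: cg_Suc)

lemma orth:
  assumes "\<forall>i<N. a i > 0"
  shows "(\<forall>k\<le>N. r k \<bullet> p k = - (norm (r k))\<^sup>2) \<and>
         (\<forall>k\<le>N. \<forall>i<k. r k \<bullet> p i = 0 \<and> r k \<bullet> r i = 0 \<and> p k \<bullet> (A *v p i) = 0)"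
  using assms
proof (induction N)
  case 0
  then show ?case by (simp add: cg_0 power2_norm_eq_inner)
next
  case (Suc N)
  have IH1: "\<forall>k\<le>N. r k \<bullet> p k = - (norm (r k))\<^sup>2"
    and IH2: "\<forall>k\<le>N. \<forall>i<k. r k \<bullet> p i = 0 \<and> r k \<bullet> r i = 0 \<and> p k \<bullet> (A *v p i) = 0"
    using Suc by auto
  have aN: "a N > 0" using Suc.prems by auto
  have pN: "p N \<noteq> 0" using aN by auto
  have rN: "r N \<noteq> 0" using pN r_zero_p by blast
  define \<alpha> where "\<alpha> = al N"
  have al_pos: "\<alpha> > 0" unfolding \<alpha>_def using aN rN by simp
  have rS: "r (Suc N) = r N + \<alpha> *\<^sub>R (A *v p N)" unfolding \<alpha>_def by (simp add: cg_Suc)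
  have Apn: "A *v p N = (1/\<alpha>) *\<^sub>R (r (Suc N) - r N)" using rS al_pos by simp
  have a1: "r (Suc N) \<bullet> p N = 0"
  proof -
    have "r (Suc N) \<bullet> p N = r N \<bullet> p N + \<alpha> * (p N \<bullet> (A *v p N))"
      unfolding rS by (simp add: inner_add_left inner_add_right inner_commute)
    also have "\<dots> = 0" using IH1 aN unfolding \<alpha>_def by simp
    finally show ?thesis .
  qed
  have a2: "r (Suc N) \<bullet> p i = 0" if "i < N" for i
  proof -
    have "r (Suc N) \<bullet> p i = r N \<bullet> p i + \<alpha> * (p i \<bullet> (A *v p N))"
      unfolding rS by (simp add: inner_add_left inner_add_right inner_commute)
    also have "p i \<bullet> (A *v p N) = p N \<bullet> (A *v p i)" by (rule sym)
    finally show ?thesis using IH2 that by simp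
  qed
  have rp: "r (Suc N) \<bullet> p i = 0" if "i \<le> N" for i
    using a1 a2 that by (cases "i = N") auto
  have rr: "r (Suc N) \<bullet> r i = 0" if "i \<le> N" for i
  proof (cases i)
    case 0
    then show ?thesis using rp[of 0] by (simp add: cg_0)
  next
    case (Suc i')
    define c where "c = (norm (r (Suc i')))\<^sup>2 / (norm (r i'))\<^sup>2"
    have eq: "r i = - p i + c *\<^sub>R p i'" unfolding Suc c_def by (rule r_from_p)
    have "r (Suc N) \<bullet> r i = - (r (Suc N) \<bullet> p i) + c * (r (Suc N) \<bullet> p i')"
      unfolding eq by (simp add: inner_add_right inner_diff_right)
    then show ?thesis using rp[of i] rp[of i'] that Suc by simp
  qed
  define \<beta> where "\<beta> = (norm (r (Suc N)))\<^sup>2 / (norm (r N))\<^sup>2"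
  have pS: "p (Suc N) = - r (Suc N) + \<beta> *\<^sub>R p N" unfolding \<beta>_def by (simp add: cg_Suc)
  have b1: "r (Suc N) \<bullet> p (Suc N) = - (norm (r (Suc N)))\<^sup>2"
    unfolding pS using a1 by (simp add: inner_add_right inner_diff_right power2_norm_eq_inner)
  have Api: "A *v p i = (1 / al i) *\<^sub>R (r (Suc i) - r i)" and ali: "al i > 0" if "i \<le> N" for i
  proof -
    have ai: "a i > 0" using Suc.prems that by auto
    hence "p i \<noteq> 0" by auto
    hence ri: "r i \<noteq> 0" using r_zero_p by blast
    thus "al i > 0" using ai by simp
    thus "A *v p i = (1 / al i) *\<^sub>R (r (Suc i) - r i)" using ai ri by (simp add: cg_Suc)
  qed
  have c1: "p (Suc N) \<bullet> (A *v p i) = 0" if "i \<le> N" for i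
  proof (cases "i = N")
    case True
    have "p (Suc N) \<bullet> (A *v p N) = - (r (Suc N) \<bullet> (A *v p N)) + \<beta> * a N"
      unfolding pS by (simp add: inner_add_left inner_diff_left)
    also have "r (Suc N) \<bullet> (A *v p N) = (1/\<alpha>) * (norm (r (Suc N)))\<^sup>2"
      unfolding Apn using rr[of N] by (simp add: inner_diff_right power2_norm_eq_inner)
    also have "\<beta> * a N = (1/\<alpha>) * (norm (r (Suc N)))\<^sup>2"
      unfolding \<beta>_def \<alpha>_def using aN rN by (simp add: field_simps)
    finally show ?thesis using True by simp
  next
    case False
    hence iN: "i < N" using that by simp
    have "p (Suc N) \<bullet> (A *v p i) = - (r (Suc N) \<bullet> (A *v p i)) + \<beta> * (p N \<bullet> (A *v p i))"
      unfolding pS by (simp add: inner_add_left inner_diff_left)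
    also have "r (Suc N) \<bullet> (A *v p i) = 0"
    proof -
      define c where "c = 1 / al i"
      have "A *v p i = c *\<^sub>R (r (Suc i) - r i)" unfolding c_def by (rule Api[OF that])
      hence "r (Suc N) \<bullet> (A *v p i) = c * (r (Suc N) \<bullet> r (Suc i) - r (Suc N) \<bullet> r i)"
        by (simp add: inner_diff_right)
      thus ?thesis using rr[of i] rr[of "Suc i"] iN by simp
    qed
    also have "p N \<bullet> (A *v p i) = 0" using IH2 iN by simp
    finally show ?thesis by simp
  qed
  have P1: "\<forall>k\<le>Suc N. r k \<bullet> p k = - (norm (r k))\<^sup>2"
  proof (intro allI impI)
    fix k assume "k \<le> Suc N"
    thus "r k \<bullet> p k = - (norm (r k))\<^sup>2" using IH1 b1 by (cases "k = Suc N") auto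
  qed
  have P2: "r k \<bullet> p i = 0 \<and> r k \<bullet> r i = 0 \<and> p k \<bullet> (A *v p i) = 0"
    if k: "k \<le> Suc N" and i: "i < k" for k i
  proof -
    show "r k \<bullet> p i = 0 \<and> r k \<bullet> r i = 0 \<and> p k \<bullet> (A *v p i) = 0"
    proof (cases "k = Suc N")
      case True
      then show ?thesis using rp rr c1 i by auto
    next
      case False
      then show ?thesis using IH2 k i by auto
    qed
  qed
  show ?case using P1 P2 by blast
qed

lemma ylem:
  assumes good: "\<forall>i<N. a i > 0" and jN: "j \<le> N"
  shows "(\<forall>k. j \<le> k \<and> k \<le> N \<longrightarrow> y j \<bullet> (A *v p k) = 0 \<and> y j \<bullet> r k = 0) \<and>
         y j \<bullet> (A *v y j) \<ge> 0 \<and> y j \<bullet> p j \<ge> 0"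
  using jN
proof (induction j)
  case 0
  then show ?case by (simp add: cg_0)
next
  case (Suc j)
  have jN: "j < N" using Suc.prems by simp
  have IH: "\<And>k. j \<le> k \<Longrightarrow> k \<le> N \<Longrightarrow> y j \<bullet> (A *v p k) = 0 \<and> y j \<bullet> r k = 0"
    and IH2: "y j \<bullet> (A *v y j) \<ge> 0" and IH3: "y j \<bullet> p j \<ge> 0" using Suc jN by auto
  have O: "(\<forall>k\<le>N. r k \<bullet> p k = - (norm (r k))\<^sup>2) \<and>
         (\<forall>k\<le>N. \<forall>i<k. r k \<bullet> p i = 0 \<and> r k \<bullet> r i = 0 \<and> p k \<bullet> (A *v p i) = 0)"
    by (rule orth[OF good])
  have aj: "a j > 0" using good jN by simp
  define \<alpha> where "\<alpha> = al j"
  have al: "\<alpha> \<ge> 0" unfolding \<alpha>_def using aj by simp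
  have yS: "y (Suc j) = y j + \<alpha> *\<^sub>R p j" unfolding \<alpha>_def by (simp add: cg_Suc)
  define \<beta> where "\<beta> = (norm (r (Suc j)))\<^sup>2 / (norm (r j))\<^sup>2"
  have be: "\<beta> \<ge> 0" unfolding \<beta>_def by simp
  have pS: "p (Suc j) = - r (Suc j) + \<beta> *\<^sub>R p j" unfolding \<beta>_def by (simp add: cg_Suc)
  have pjk: "p j \<bullet> (A *v p k) = 0 \<and> p j \<bullet> r k = 0" if "Suc j \<le> k" "k \<le> N" for k
  proof -
    have "p j \<bullet> (A *v p k) = p k \<bullet> (A *v p j)" by (rule sym)
    moreover have "p j \<bullet> r k = r k \<bullet> p j" by (simp add: inner_commute)
    ultimately show ?thesis using O that by auto
  qed
  have A1: "y (Suc j) \<bullet> (A *v p k) = 0 \<and> y (Suc j) \<bullet> r k = 0" if "Suc j \<le> k" "k \<le> N" for k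
    using IH[of k] pjk[OF that] that unfolding yS by (simp add: inner_add_left)
  have yApj: "y j \<bullet> (A *v p j) = 0" using IH[of j] jN by simp
  have pAyj: "p j \<bullet> (A *v y j) = 0" using yApj sym[of "p j" "y j"] by simp
  have "y (Suc j) \<bullet> (A *v y (Suc j)) = y j \<bullet> (A *v y j) + \<alpha> * (y j \<bullet> (A *v p j)) + \<alpha> * (p j \<bullet> (A *v y j)) + \<alpha> * \<alpha> * a j"
    unfolding yS by (simp add: inner_add_left inner_add_right matrix_vector_right_distrib mv_scale algebra_simps)
  also have "\<dots> \<ge> 0" using IH2 yApj pAyj al aj by simp
  finally have A2: "y (Suc j) \<bullet> (A *v y (Suc j)) \<ge> 0" .
  have "y (Suc j) \<bullet> p (Suc j) = - (y j \<bullet> r (Suc j)) - \<alpha> * (p j \<bullet> r (Suc j)) + \<beta> * (y j \<bullet> p j) + \<alpha> * \<beta> * (p j \<bullet> p j)"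
    unfolding yS pS by (simp add: inner_add_left inner_add_right algebra_simps)
  also have "\<dots> = \<beta> * (y j \<bullet> p j) + \<alpha> * \<beta> * (p j \<bullet> p j)"
    using IH[of "Suc j"] pjk[of "Suc j"] jN by simp
  also have "\<dots> \<ge> 0" using IH3 al be by simp
  finally have A3: "y (Suc j) \<bullet> p (Suc j) \<ge> 0" .
  show ?case using A1 A2 A3 by blast
qed

lemma Aform:
  assumes A_def: "A = Hk + (2 * \<epsilon>) *\<^sub>R mat 1"
  shows "v \<bullet> (Hk *v v) = v \<bullet> (A *v v) - 2 * \<epsilon> * (v \<bullet> v)"
proof -
  have "A *v v = Hk *v v + (2 * \<epsilon>) *\<^sub>R v"
    unfolding A_def by (simp add: matrix_vector_mult_add_rdistrib scaleR_matrix_vector_assoc[symmetric])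
  thus ?thesis by (simp add: inner_add_right)
qed

lemma interior:
  assumes A_def: "A = Hk + (2 * \<epsilon>) *\<^sub>R mat 1" and eps: "\<epsilon> > 0"
    and good: "\<forall>i<N. a i > 0"
  shows "- (g \<bullet> y N) - 1/2 * (y N \<bullet> (Hk *v y N)) \<ge> \<epsilon> * (norm (y N))\<^sup>2"
proof -
  have Y: "y N \<bullet> r N = 0" "y N \<bullet> (A *v y N) \<ge> 0" using ylem[OF good, of N] by auto
  have gv: "g \<bullet> v = r N \<bullet> v - (A *v y N) \<bullet> v" for v by (simp add: r_eq inner_add_left)
  have "g \<bullet> y N = - (y N \<bullet> (A *v y N))" unfolding gv using Y by (simp add: inner_commute)
  moreover have "y N \<bullet> (Hk *v y N) = y N \<bullet> (A *v y N) - 2 * \<epsilon> * (y N \<bullet> y N)" by (rule Aform[OF A_def])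
  ultimately show ?thesis using Y unfolding power2_norm_eq_inner by linarith
qed

lemma boundary:
  assumes A_def: "A = Hk + (2 * \<epsilon>) *\<^sub>R mat 1" and eps: "\<epsilon> > 0"
    and good: "\<forall>i<j. a i > 0" and s: "s = y j + \<sigma> *\<^sub>R p j" and sig: "\<sigma> \<ge> 0"
    and cases: "a j \<le> \<epsilon> * (norm (p j))\<^sup>2 \<or> (a j > 0 \<and> norm (y (Suc j)) \<ge> norm s)"
  shows "- (g \<bullet> s) - 1/2 * (s \<bullet> (Hk *v s)) \<ge> 1/4 * \<epsilon> * (norm s)\<^sup>2"
proof -
  have Y: "y j \<bullet> r j = 0" "y j \<bullet> (A *v y j) \<ge> 0" "y j \<bullet> (A *v p j) = 0" "y j \<bullet> p j \<ge> 0"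
    using ylem[OF good, of j] by auto
  have rp: "r j \<bullet> p j = - (r j \<bullet> r j)" using orth[OF good] by (simp add: power2_norm_eq_inner)
  have pAy: "p j \<bullet> (A *v y j) = 0" using Y(3) sym[of "p j" "y j"] by simp
  define Y2 where "Y2 = y j \<bullet> (A *v y j)"
  define R where "R = r j \<bullet> r j"
  define a' where "a' = a j"
  define YP where "YP = y j \<bullet> p j"
  define PP where "PP = p j \<bullet> p j"
  define YY where "YY = y j \<bullet> y j"
  define SS where "SS = s \<bullet> s"
  have R0: "R \<ge> 0" unfolding R_def by simp
  have PP0: "PP \<ge> 0" unfolding PP_def by simp
  have YY0: "YY \<ge> 0" unfolding YY_def by simp
  have SS0: "SS \<ge> 0" unfolding SS_def by simp
  have YP0: "YP \<ge> 0" unfolding YP_def using Y by simp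
  have gv: "g \<bullet> v = r j \<bullet> v - (A *v y j) \<bullet> v" for v by (simp add: r_eq inner_add_left)
  have gs: "g \<bullet> s = - Y2 - \<sigma> * R"
    unfolding gv s Y2_def R_def using Y rp pAy
    by (simp add: inner_add_right inner_commute)
  have "s \<bullet> (A *v s) = y j \<bullet> (A *v y j) + \<sigma> * (y j \<bullet> (A *v p j)) + \<sigma> * (p j \<bullet> (A *v y j)) + \<sigma> * (\<sigma> * a j)"
    unfolding s by (simp add: inner_add_left inner_add_right matrix_vector_right_distrib mv_scale distrib_left)
  hence sAs: "s \<bullet> (A *v s) = Y2 + \<sigma> * \<sigma> * a'"
    unfolding Y2_def a'_def using Y pAy by simp
  have D: "- (g \<bullet> s) - 1/2 * (s \<bullet> (Hk *v s)) = \<epsilon> * SS + 1/2 * Y2 + \<sigma> * R - 1/2 * (\<sigma> * \<sigma> * a')"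
    using Aform[OF A_def, of s] gs sAs unfolding SS_def by (simp add: field_simps)
  have Y20: "Y2 \<ge> 0" unfolding Y2_def using Y by simp
  have ss: "SS = YY + 2 * \<sigma> * YP + \<sigma> * \<sigma> * PP"
    unfolding SS_def YY_def YP_def PP_def s by (rule sq_exp)
  have ns: "(norm s)\<^sup>2 = SS" unfolding SS_def by (simp add: power2_norm_eq_inner)
  have sR: "\<sigma> * R \<ge> 0" using sig R0 by simp
  have key: "1/2 * (\<sigma> * \<sigma> * a') \<le> 1/2 * \<epsilon> * SS + \<sigma> * R"
    using cases
  proof
    assume neg: "a j \<le> \<epsilon> * (norm (p j))\<^sup>2"
    have "2 * \<sigma> * YP \<ge> 0" using sig YP0 by simp
    hence h1: "\<sigma> * \<sigma> * PP \<le> SS" using ss YY0 by linarith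
    have h2: "\<sigma> * \<sigma> * a' \<le> \<sigma> * \<sigma> * (\<epsilon> * PP)"
      using neg sig unfolding a'_def PP_def by (intro mult_left_mono) (auto simp: power2_norm_eq_inner)
    have "\<epsilon> * (\<sigma> * \<sigma> * PP) \<le> \<epsilon> * SS" using h1 eps by (intro mult_left_mono) auto
    moreover have "\<sigma> * \<sigma> * (\<epsilon> * PP) = \<epsilon> * (\<sigma> * \<sigma> * PP)" by (simp add: algebra_simps)
    ultimately have "\<sigma> * \<sigma> * a' \<le> \<epsilon> * SS" using h2 by linarith
    thus ?thesis using sR by linarith
  next
    assume nrm: "a j > 0 \<and> norm (y (Suc j)) \<ge> norm s"
    hence apos: "a' > 0" unfolding a'_def by simp
    define \<alpha> where "\<alpha> = R / a'"
    have al0: "\<alpha> \<ge> 0" unfolding \<alpha>_def using R0 apos by simp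
    have yS: "y (Suc j) = y j + \<alpha> *\<^sub>R p j" unfolding \<alpha>_def R_def a'_def by (simp add: cg_Suc power2_norm_eq_inner)
    have "p j \<noteq> 0" using apos unfolding a'_def by auto
    hence pp: "PP > 0" unfolding PP_def by simp
    have sa: "\<sigma> \<le> \<alpha>"
    proof (rule ccontr)
      assume "\<not> \<sigma> \<le> \<alpha>"
      hence gt: "\<sigma> > \<alpha>" by simp
      have e1: "y (Suc j) \<bullet> y (Suc j) = YY + 2 * \<alpha> * YP + \<alpha> * \<alpha> * PP"
        unfolding yS YY_def YP_def PP_def by (rule sq_exp)
      have "\<alpha> * \<alpha> < \<sigma> * \<sigma>" using gt al0 by (intro mult_strict_mono) auto
      hence e2: "\<alpha> * \<alpha> * PP < \<sigma> * \<sigma> * PP" using pp by (intro mult_strict_right_mono) auto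
      have e3: "\<alpha> * YP \<le> \<sigma> * YP" using gt YP0 by (intro mult_right_mono) auto
      have "y (Suc j) \<bullet> y (Suc j) < SS" using ss e1 e2 e3 by linarith
      moreover have "(norm s)\<^sup>2 \<le> (norm (y (Suc j)))\<^sup>2" using nrm by (intro power_mono) auto
      hence "SS \<le> y (Suc j) \<bullet> y (Suc j)" unfolding ns by (simp add: power2_norm_eq_inner)
      ultimately show False by simp
    qed
    have "\<sigma> * \<sigma> * a' \<le> \<sigma> * \<alpha> * a'" using sa sig apos by (intro mult_right_mono mult_left_mono) auto
    also have "\<sigma> * \<alpha> * a' = \<sigma> * R" unfolding \<alpha>_def using apos by simp
    finally have "\<sigma> * \<sigma> * a' \<le> \<sigma> * R" .
    moreover have "\<epsilon> * SS \<ge> 0" using eps SS0 by simp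
    ultimately show ?thesis using sR by linarith
  qed
  have "\<epsilon> * SS \<ge> 0" using eps SS0 by simp
  thus ?thesis unfolding D ns using key Y20 by linarith
qed

end


lemma cg_out_decrease:
  fixes G :: "real^'n" and Hk :: "real^'n^'n"
  assumes symH: "\<And>u v. u \<bullet> (Hk *v v) = v \<bullet> (Hk *v u)" and eps: "\<epsilon> > 0"
    and out: "cg_output G Hk \<epsilon> \<delta> \<zeta> capCG M s flag"
  shows "- (G \<bullet> s) - 1/2 * (s \<bullet> (Hk *v s)) \<ge> 1/4 * \<epsilon> * (norm s)\<^sup>2"
proof -
  define A where "A = Hk + (2 * \<epsilon>) *\<^sub>R mat 1"
  have Av: "A *v v = Hk *v v + (2 * \<epsilon>) *\<^sub>R v" for v
    unfolding A_def by (simp add: matrix_vector_mult_add_rdistrib scaleR_matrix_vector_assoc[symmetric])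
  interpret cgsym G A
    by unfold_locales (simp add: Av inner_add_right symH inner_commute)
  define kmax where "kmax = cg_kmax CARD('n) \<epsilon> \<zeta> capCG M"
  have q: "1/4 * \<epsilon> * (norm v)\<^sup>2 \<le> \<epsilon> * (norm v)\<^sup>2" for v :: "real^'n"
    using eps by (simp add: mult_right_mono)
  have goodI: "a i > 0" if "\<not> a i \<le> \<epsilon> * (norm (p i))\<^sup>2" for i
    using that eps by (smt (verit) mult_nonneg_nonneg zero_le_power2)
  have out': "(\<exists>j. real j < kmax \<and> (\<forall>i<j. \<not> (a i \<le> \<epsilon> * (norm (p i))\<^sup>2 \<or> norm (y (Suc i)) \<ge> \<delta> \<or>
                   norm (r (Suc i)) \<le> \<zeta> / 2 * min (norm G) (\<epsilon> * norm (y (Suc i))))) \<and>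
            ((a j \<le> \<epsilon> * (norm (p j))\<^sup>2 \<and> flag = BND_NEG \<and>
                (\<exists>\<sigma>\<ge>0. s = y j + \<sigma> *\<^sub>R p j \<and> norm s = \<delta>))
           \<or> (\<not> a j \<le> \<epsilon> * (norm (p j))\<^sup>2 \<and> norm (y (Suc j)) \<ge> \<delta> \<and> flag = BND_NORM \<and>
                (\<exists>\<sigma>\<ge>0. s = y j + \<sigma> *\<^sub>R p j \<and> norm s = \<delta>))
           \<or> (\<not> a j \<le> \<epsilon> * (norm (p j))\<^sup>2 \<and> \<not> norm (y (Suc j)) \<ge> \<delta> \<and>
                 norm (r (Suc j)) \<le> \<zeta> / 2 * min (norm G) (\<epsilon> * norm (y (Suc j))) \<and> flag = INT_RES \<and> s = y (Suc j))))
      \<or> ((\<forall>i. real i < kmax \<longrightarrow> \<not> (a i \<le> \<epsilon> * (norm (p i))\<^sup>2 \<or> norm (y (Suc i)) \<ge> \<delta> \<or>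
                   norm (r (Suc i)) \<le> \<zeta> / 2 * min (norm G) (\<epsilon> * norm (y (Suc i))))) \<and> flag = INT_MAX \<and>
            s = y (nat \<lceil>kmax\<rceil>))" (is "?PA \<or> ?PB")
    using out unfolding cg_output_def Let_def kmax_def A_def by simp
  then show ?thesis
  proof
    assume ?PA
    then obtain j where pre: "\<forall>i<j. \<not> (a i \<le> \<epsilon> * (norm (p i))\<^sup>2 \<or> norm (y (Suc i)) \<ge> \<delta> \<or>
                   norm (r (Suc i)) \<le> \<zeta> / 2 * min (norm G) (\<epsilon> * norm (y (Suc i))))"
      and cs: "(a j \<le> \<epsilon> * (norm (p j))\<^sup>2 \<and> flag = BND_NEG \<and>
                (\<exists>\<sigma>\<ge>0. s = y j + \<sigma> *\<^sub>R p j \<and> norm s = \<delta>))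
           \<or> (\<not> a j \<le> \<epsilon> * (norm (p j))\<^sup>2 \<and> norm (y (Suc j)) \<ge> \<delta> \<and> flag = BND_NORM \<and>
                (\<exists>\<sigma>\<ge>0. s = y j + \<sigma> *\<^sub>R p j \<and> norm s = \<delta>))
           \<or> (\<not> a j \<le> \<epsilon> * (norm (p j))\<^sup>2 \<and> \<not> norm (y (Suc j)) \<ge> \<delta> \<and>
                 norm (r (Suc j)) \<le> \<zeta> / 2 * min (norm G) (\<epsilon> * norm (y (Suc j))) \<and> flag = INT_RES \<and> s = y (Suc j))"
      by blast
    have good: "\<forall>i<j. a i > 0" using pre goodI by blast
    from cs show ?thesis
    proof (elim disjE conjE exE)
      fix \<sigma> assume neg: "a j \<le> \<epsilon> * (norm (p j))\<^sup>2" and sg: "\<sigma> \<ge> 0" and sd: "s = y j + \<sigma> *\<^sub>R p j"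
      show ?thesis using boundary[OF A_def eps good sd sg] neg by blast
    next
      fix \<sigma> assume nn: "\<not> a j \<le> \<epsilon> * (norm (p j))\<^sup>2" and yd: "norm (y (Suc j)) \<ge> \<delta>"
        and sg: "\<sigma> \<ge> 0" and sd: "s = y j + \<sigma> *\<^sub>R p j" and ns: "norm s = \<delta>"
      show ?thesis using boundary[OF A_def eps good sd sg] goodI[OF nn] yd ns by auto
    next
      assume nn: "\<not> a j \<le> \<epsilon> * (norm (p j))\<^sup>2" and sd: "s = y (Suc j)"
      have "\<forall>i<Suc j. a i > 0" using good goodI[OF nn] less_Suc_eq by auto
      from interior[OF A_def eps this] show ?thesis using q[of s] sd by simp
    qed
  next
    assume ?PB
    hence pre: "\<forall>i. real i < kmax \<longrightarrow> \<not> a i \<le> \<epsilon> * (norm (p i))\<^sup>2" and sd: "s = y (nat \<lceil>kmax\<rceil>)" by auto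
    have "\<forall>i<nat \<lceil>kmax\<rceil>. a i > 0"
    proof (intro allI impI)
      fix i assume "i < nat \<lceil>kmax\<rceil>"
      hence "int i < \<lceil>kmax\<rceil>" by linarith
      hence "real i < kmax" using less_ceiling_iff by (metis of_int_of_nat_eq)
      thus "a i > 0" using pre goodI by blast
    qed
    from interior[OF A_def eps this] show ?thesis using q[of s] sd by simp
  qed
qed

theorem lemma4p1:
  fixes f :: "real^'n \<Rightarrow> real" and g :: "real^'n \<Rightarrow> real^'n" and H :: "real^'n \<Rightarrow> real^'n^'n"
    and \<epsilon>g \<epsilon>H \<gamma>1 \<gamma>2 \<psi> \<delta>0 \<delta>max \<eta> \<zeta> \<xi> M Lg :: real and x0 :: "real^'n" and capCG :: bool
    and x :: "nat \<Rightarrow> real^'n" and \<delta> :: "nat \<Rightarrow> real" and s :: "nat \<Rightarrow> real^'n" and K :: "nat set"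
  assumes grad: "\<And>y. (f has_derivative (\<lambda>h. g y \<bullet> h)) (at y)"
    and hess: "\<And>y. (g has_derivative (\<lambda>h. H y *v h)) (at y)"
    and hess_cont: "continuous_on UNIV H"
    and lip: "\<And>y z. norm (g y - g z) \<le> Lg * norm (y - z)"
    and "\<epsilon>g > 0" and "\<epsilon>H > 0"
    and "0 < \<gamma>1" and "\<gamma>1 < 1" and "\<gamma>2 \<ge> 1" and "1 / \<gamma>2 < \<psi>" and "\<psi> \<le> 1"
    and "\<delta>0 > 0" and "\<delta>max \<ge> \<delta>0"
    and "0 < \<eta>" and "\<eta> < 1" and "0 < \<zeta>" and "\<zeta> < 1" and "0 \<le> \<xi>" and "\<xi> < 1"
    and "M \<ge> Lg"
    and run: "alg4_run f g H \<epsilon>g \<epsilon>H \<gamma>1 \<gamma>2 \<psi> x0 \<delta>0 \<delta>max \<eta> \<zeta> capCG M x \<delta> s K"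
    and k: "k \<in> K"
  shows "tr_model f g H (x k) (x k) - tr_model f g H (x k) (x k + s k) \<ge> 1/4 * \<epsilon>H * (norm (s k))\<^sup>2"
proof -
  have eps: "\<epsilon>H > 0" by fact
  have step: "alg4_step g H \<epsilon>g \<epsilon>H \<zeta> capCG M (x k) (\<delta> k) (s k)"
    using run k unfolding alg4_run_def by blast
  then obtain sCG outCG where ph: "alg4_cg_phase (g (x k)) (H (x k)) \<epsilon>H (\<delta> k) \<zeta> capCG M sCG outCG"
    and ch: "if alg4_accept_cg (g (x k)) \<epsilon>g outCG then s k = sCG
         else meo_direction (g (x k)) (H (x k)) \<epsilon>H (\<delta> k) (s k)"
    unfolding alg4_step_def by blast
  have symH: "\<And>u v. u \<bullet> (H (x k) *v v) = v \<bullet> (H (x k) *v u)"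
    by (rule hess_sym[OF grad hess])
  have mdiff: "tr_model f g H (x k) (x k) - tr_model f g H (x k) (x k + s k)
     = - (g (x k) \<bullet> s k) - 1/2 * (s k \<bullet> (H (x k) *v s k))"
    unfolding tr_model_def by simp
  show ?thesis
  proof (cases "alg4_accept_cg (g (x k)) \<epsilon>g outCG")
    case True
    hence sk: "s k = sCG" using ch by simp
    show ?thesis
    proof (cases "g (x k) = 0")
      case True
      then show ?thesis using ph sk mdiff unfolding alg4_cg_phase_def by simp
    next
      case False
      hence "cg_output (g (x k)) (H (x k)) \<epsilon>H (\<delta> k) \<zeta> capCG M sCG outCG"
        using ph unfolding alg4_cg_phase_def by simp
      from cg_out_decrease[OF symH eps this] show ?thesis using sk mdiff by simp
    qed
  next
    case False
    hence "meo_direction (g (x k)) (H (x k)) \<epsilon>H (\<delta> k) (s k)" using ch by simp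
    then have gs: "g (x k) \<bullet> s k \<le> 0" and sHs: "s k \<bullet> (H (x k) *v s k) \<le> - (1/2) * \<epsilon>H * (norm (s k))\<^sup>2"
      unfolding meo_direction_def by blast+
    show ?thesis unfolding mdiff using gs sHs by linarith
  qed
qed

end
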